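(* Assume CH. There exists a set $A\subseteq\mathbb{R}^2$ which is a Hamel basis of $\mathbb{R}^2$ over $\mathbb{Q}$ and such that: for every strictly increasing continuous function $f:\mathbb{R}\to\mathbb{R}$ the set $\{x\in\mathbb{R}:(x,f(x))\in A\}$ is a strong Luzin set, and for every strictly decreasing locally absolutely continuous function $g:\mathbb{R}\to\mathbb{R}$ the set $\{x\in\mathbb{R}:(x,g(x))\in A\}$ is a strong Sierpiński set.
   Context: A Luzin set is $L\subseteq\mathbb{R}$ with $|L|=\mathfrak{c}$ and $L\cap M$ countable for every meager $M$; strong Luzin if moreover $L\cap B$ is uncountable for every non-meager Borel $B$. A Sierpiński set is $S\subseteq\mathbb{R}$ with $|S|=\mathfrak{c}$ and $S\cap N$ countable for every Lebesgue-null $N$; strong Sierpiński if moreover $S\cap B$ is uncountable for every Borel $B$ of positive measure. (For a locally absolutely continuous $g$, a subset of its graph is null for arc-length measure iff its projection to the $x$-axis is Lebesgue-null, so the condition says $A\cap\mathrm{graph}(g)$ is a strong Sierpiński set in the graph.) A Hamel basis of $\mathbb{R}^2$ is a basis over $\mathbb{Q}$. *)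

theory Defs
  imports "HOL-Analysis.Analysis" "HOL-Library.Equipollence"
begin

definition CH :: bool where
  "CH \<longleftrightarrow> (\<forall>X::real set. \<not> countable X \<longrightarrow> X \<approx> (UNIV::real set))"

definition nowhere_dense :: "real set \<Rightarrow> bool" where
  "nowhere_dense N \<longleftrightarrow> interior (closure N) = {}"

definition meager :: "real set \<Rightarrow> bool" where
  "meager M \<longleftrightarrow> (\<exists>F. countable F \<and> (\<forall>N\<in>F. nowhere_dense N) \<and> M \<subseteq> \<Union>F)"

definition strong_luzin :: "real set \<Rightarrow> bool" where
  "strong_luzin L \<longleftrightarrow> L \<approx> (UNIV::real set)
     \<and> (\<forall>M. meager M \<longrightarrow> countable (L \<inter> M))
     \<and> (\<forall>B \<in> sets borel. \<not> meager B \<longrightarrow> \<not> countable (L \<inter> B))"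

definition strong_sierpinski :: "real set \<Rightarrow> bool" where
  "strong_sierpinski S \<longleftrightarrow> S \<approx> (UNIV::real set)
     \<and> (\<forall>N \<in> null_sets lebesgue. countable (S \<inter> N))
     \<and> (\<forall>B \<in> sets borel. emeasure lebesgue B > 0 \<longrightarrow> \<not> countable (S \<inter> B))"

definition abs_continuous_on_interval :: "(real \<Rightarrow> real) \<Rightarrow> real \<Rightarrow> real \<Rightarrow> bool" where
  "abs_continuous_on_interval f a b \<longleftrightarrow>
     (\<forall>\<epsilon>>0. \<exists>\<delta>>0. \<forall>(n::nat) (u::nat \<Rightarrow> real) (v::nat \<Rightarrow> real).
        (\<forall>i<n. a \<le> u i \<and> u i \<le> v i \<and> v i \<le> b)
        \<and> (\<forall>i<n. \<forall>j<n. i \<noteq> j \<longrightarrow> v i \<le> u j \<or> v j \<le> u i)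
        \<and> (\<Sum>i<n. v i - u i) < \<delta>
        \<longrightarrow> (\<Sum>i<n. \<bar>f (v i) - f (u i)\<bar>) < \<epsilon>)"

definition locally_abs_continuous :: "(real \<Rightarrow> real) \<Rightarrow> bool" where
  "locally_abs_continuous f \<longleftrightarrow> (\<forall>a b. a \<le> b \<longrightarrow> abs_continuous_on_interval f a b)"

definition rat_independent :: "(real \<times> real) set \<Rightarrow> bool" where
  "rat_independent A \<longleftrightarrow> (\<forall>S (c :: real \<times> real \<Rightarrow> rat). finite S \<and> S \<subseteq> A
      \<and> (\<Sum>a\<in>S. of_rat (c a) *\<^sub>R a) = 0 \<longrightarrow> (\<forall>a\<in>S. c a = 0))"

definition rat_span :: "(real \<times> real) set \<Rightarrow> (real \<times> real) set" where
  "rat_span A = {v. \<exists>S (c :: real \<times> real \<Rightarrow> rat). finite S \<and> S \<subseteq> A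
      \<and> v = (\<Sum>a\<in>S. of_rat (c a) *\<^sub>R a)}"

definition hamel_basis :: "(real \<times> real) set \<Rightarrow> bool" where
  "hamel_basis A \<longleftrightarrow> rat_independent A \<and> rat_span A = UNIV"

end

theory Submission
  imports Defs
begin

unbundle cardinal_syntax



definition RR :: "real rel" where "RR = |UNIV::real set|"
definition lt :: "real \<Rightarrow> real \<Rightarrow> bool" where "lt a b \<longleftrightarrow> (a,b) \<in> RR \<and> a \<noteq> b"

lemma RR_wo: "Well_order RR" unfolding RR_def by (rule card_of_Well_order)
lemma RR_field: "Field RR = UNIV" unfolding RR_def by (rule Field_card_of)

lemma lt_wf: "wf {(a,b). lt a b}"
proof -
  have "wf (RR - Id)" using RR_wo wo_rel.WF wo_rel_def by blast
  moreover have "{(a,b). lt a b} = RR - Id" unfolding lt_def by auto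
  ultimately show ?thesis by simp
qed

lemma lt_trans: "lt a b \<Longrightarrow> lt b c \<Longrightarrow> lt a c"
proof -
  assume ab: "lt a b" and bc: "lt b c"
  have tr: "trans RR" and an: "antisym RR" using RR_wo unfolding well_order_on_def linear_order_on_def partial_order_on_def preorder_on_def by auto
  have "(a,c) \<in> RR" using ab bc tr unfolding lt_def trans_def by blast
  moreover have "a \<noteq> c" using ab bc an unfolding lt_def antisym_def by blast
  ultimately show ?thesis unfolding lt_def by simp
qed

lemma lt_total: "a \<noteq> b \<Longrightarrow> lt a b \<or> lt b a"
proof -
  assume "a \<noteq> b"
  have "Total RR" using RR_wo unfolding well_order_on_def linear_order_on_def by auto
  then show ?thesis using \<open>a\<noteq>b\<close> RR_field unfolding lt_def total_on_def by auto
qed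

lemma lt_irrefl: "\<not> lt a a" unfolding lt_def by simp

lemma lt_countable: assumes CH shows "countable {b. lt b a}"
proof (rule ccontr)
  assume nc: "\<not> countable {b. lt b a}"
  have eq: "{b. lt b a} = underS RR a" unfolding lt_def underS_def by auto
  have "{b. lt b a} \<approx> (UNIV::real set)" using assms nc unfolding CH_def by blast
  then have "|underS RR a| =o RR" unfolding RR_def eq eqpoll_iff_card_of_ordIso .
  moreover have "|underS RR a| <o RR"
    using card_of_underS[of "|UNIV::real set|" a] card_of_Card_order[of "UNIV::real set"] Field_card_of[of "UNIV::real set"] unfolding RR_def by auto
  ultimately show False using not_ordLess_ordIso by blast
qed

lemma le_countable: assumes CH shows "countable {b. lt b a \<or> b = a}"
proof -
  have "{b. lt b a \<or> b = a} = insert a {b. lt b a}" by auto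
  then show ?thesis using lt_countable[OF assms] by simp
qed


lemma nd_subset: "nowhere_dense N \<Longrightarrow> N' \<subseteq> N \<Longrightarrow> nowhere_dense N'"
  unfolding nowhere_dense_def
proof -
  assume a: "interior (closure N) = {}" "N' \<subseteq> N"
  have "interior (closure N') \<subseteq> interior (closure N)" using a(2) by (rule interior_mono[OF closure_mono])
  then show "interior (closure N') = {}" using a(1) by blast
qed

lemma nd_closure: "nowhere_dense N \<Longrightarrow> nowhere_dense (closure N)"
  unfolding nowhere_dense_def by simp

lemma meager_subset: "meager M \<Longrightarrow> M' \<subseteq> M \<Longrightarrow> meager M'"
proof -
  assume "meager M" "M' \<subseteq> M"
  then obtain F where "countable F" "\<forall>N\<in>F. nowhere_dense N" "M \<subseteq> \<Union>F" unfolding meager_def by blast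
  then show ?thesis unfolding meager_def using \<open>M' \<subseteq> M\<close> by blast
qed

lemma meager_empty: "meager {}"
  unfolding meager_def by (rule exI[of _ "{}"]) auto

lemma meager_Union:
  assumes "countable \<M>" "\<And>M. M \<in> \<M> \<Longrightarrow> meager M"
  shows "meager (\<Union>\<M>)"
proof -
  have "\<forall>M\<in>\<M>. \<exists>F. countable F \<and> (\<forall>N\<in>F. nowhere_dense N) \<and> M \<subseteq> \<Union>F"
    using assms(2) unfolding meager_def by blast
  then obtain FF where FF: "\<And>M. M \<in> \<M> \<Longrightarrow> countable (FF M)"
     "\<And>M N. M \<in> \<M> \<Longrightarrow> N \<in> FF M \<Longrightarrow> nowhere_dense N"
     "\<And>M. M \<in> \<M> \<Longrightarrow> M \<subseteq> \<Union>(FF M)"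
    by metis
  have c: "countable (\<Union>M\<in>\<M>. FF M)" using FF(1) assms(1) by (intro countable_UN) auto
  have n: "\<forall>N\<in>(\<Union>M\<in>\<M>. FF M). nowhere_dense N" using FF(2) by blast
  have s: "\<Union>\<M> \<subseteq> \<Union>(\<Union>M\<in>\<M>. FF M)"
  proof
    fix x assume "x \<in> \<Union>\<M>"
    then obtain M where "M \<in> \<M>" "x \<in> M" by blast
    then obtain N where "N \<in> FF M" "x \<in> N" using FF(3) by blast
    then show "x \<in> \<Union>(\<Union>M\<in>\<M>. FF M)" using \<open>M \<in> \<M>\<close> by blast
  qed
  show ?thesis unfolding meager_def using c n s by blast
qed

lemma meager_Un: "meager A \<Longrightarrow> meager B \<Longrightarrow> meager (A \<union> B)"
  using meager_Union[of "{A,B}"] by auto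

lemma meager_countable: "countable (M::real set) \<Longrightarrow> meager M"
proof -
  assume "countable M"
  have "nowhere_dense {x}" for x :: real unfolding nowhere_dense_def by (simp add: interior_singleton)
  then show ?thesis unfolding meager_def using \<open>countable M\<close>
    by (intro exI[of _ "(\<lambda>x. {x}) ` M"]) auto
qed

lemma Baire_meager:
  assumes "open U" "U \<noteq> {}" "meager M"
  shows "\<exists>x\<in>U. x \<notin> M"
proof -
  obtain F where F: "countable F" "\<forall>N\<in>F. nowhere_dense N" "M \<subseteq> \<Union>F"
    using assms(3) unfolding meager_def by blast
  define G where "G = (\<lambda>N. - closure N) ` F"
  have "(UNIV::real set) \<subseteq> closure (\<Inter>G)"
  proof (rule Baire)
    show "closed (UNIV::real set)" by simp
    show "countable G" unfolding G_def using F by simp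
    fix T assume "T \<in> G"
    then obtain N where N: "N \<in> F" "T = - closure N" unfolding G_def by blast
    have "open T" using N by auto
    moreover have "closure T = UNIV" using N F(2) unfolding nowhere_dense_def
      by (simp add: closure_complement)
    ultimately show "openin (top_of_set UNIV) T \<and> UNIV \<subseteq> closure T" by simp
  qed
  then have "closure (\<Inter>G) = UNIV" by auto
  then have "U \<inter> \<Inter>G \<noteq> {}" using assms(1,2) open_Int_closure_eq_empty[of U "\<Inter>G"] by auto
  then obtain x where x: "x \<in> U" "x \<in> \<Inter>G" by blast
  have "x \<notin> M"
  proof
    assume "x \<in> M"
    then obtain N where "N \<in> F" "x \<in> N" using F by blast
    then have "x \<notin> - closure N" using closure_subset by auto
    then show False using x \<open>N \<in> F\<close> unfolding G_def by blast
  qed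
  then show ?thesis using x by blast
qed

lemma UNIV_not_meager: "\<not> meager (UNIV::real set)"
  using Baire_meager[of UNIV UNIV] by auto

definition openDec :: "(rat \<times> rat) set \<Rightarrow> real set" where
  "openDec S = (\<Union>(a,b)\<in>S. {of_rat a <..< of_rat b})"

lemma open_openDec: "open (openDec S)"
  unfolding openDec_def by (auto intro!: open_UN)

lemma rat_between: "(x::real) < y \<Longrightarrow> \<exists>q. x < of_rat q \<and> of_rat q < y"
  by (metis Rats_cases Rats_dense_in_real)

lemma openDec_surj: "open U \<Longrightarrow> \<exists>S. openDec S = U"
proof -
  assume "open U"
  let ?S = "{(a,b). {of_rat a <..< of_rat b} \<subseteq> U}"
  have "openDec ?S = U"
  proof
    show "openDec ?S \<subseteq> U" unfolding openDec_def by auto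
    show "U \<subseteq> openDec ?S"
    proof
      fix x assume "x \<in> U"
      then obtain e where e: "e > 0" "ball x e \<subseteq> U" using \<open>open U\<close> open_contains_ball by blast
      obtain a where a: "x - e < of_rat a" "of_rat a < x" using rat_between[of "x-e" x] e by auto
      obtain b where b: "x < of_rat b" "of_rat b < x + e" using rat_between[of x "x+e"] e by auto
      have "{of_rat a <..< of_rat b} \<subseteq> ball x e" using a b by (auto simp: dist_real_def)
      then show "x \<in> openDec ?S" unfolding openDec_def using a b e by force
    qed
  qed
  then show ?thesis by blast
qed

definition Mdec :: "(nat \<times> rat \<times> rat) set \<Rightarrow> real set" where
  "Mdec S = (\<Union>n. - openDec {(a,b). (n,a,b) \<in> S})"

lemma Mdec_cover:
  assumes "meager M" shows "\<exists>S. M \<subseteq> Mdec S \<and> meager (Mdec S)"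
proof -
  obtain F where F: "countable F" "\<forall>N\<in>F. nowhere_dense N" "M \<subseteq> \<Union>F"
    using assms unfolding meager_def by blast
  define F' where "F' = insert {} F"
  have F': "countable F'" "\<forall>N\<in>F'. nowhere_dense N" "M \<subseteq> \<Union>F'" "F' \<noteq> {}"
    using F unfolding F'_def nowhere_dense_def by auto
  define C where "C n = closure (from_nat_into F' n)" for n
  have "\<exists>T. openDec T = - C n" for n using openDec_surj[of "- C n"] unfolding C_def by auto
  then obtain T where T: "\<And>n. openDec (T n) = - C n" by metis
  define S where "S = {(n,a,b). (a,b) \<in> T n}"
  have eq: "Mdec S = (\<Union>n. C n)" unfolding Mdec_def S_def using T by auto
  have "M \<subseteq> (\<Union>n. C n)"
  proof
    fix x assume "x \<in> M"
    then obtain N where "N \<in> F'" "x \<in> N" using F' by blast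
    then obtain n where "from_nat_into F' n = N" using from_nat_into_surj[OF F'(1)] by blast
    then show "x \<in> (\<Union>n. C n)" unfolding C_def using \<open>x\<in>N\<close> closure_subset by blast
  qed
  moreover have "meager (\<Union>n. C n)" unfolding meager_def
    apply (rule exI[of _ "range C"])
    using F' from_nat_into[OF F'(4)] nd_closure unfolding C_def by auto
  ultimately show ?thesis using eq by (intro exI[of _ S]) simp
qed


definition bp :: "real set \<Rightarrow> bool" where
  "bp B \<longleftrightarrow> (\<exists>U. open U \<and> meager ((B - U) \<union> (U - B)))"

lemma bp_open: "open B \<Longrightarrow> bp B"
  unfolding bp_def using meager_empty by (intro exI[of _ B]) simp

lemma closure_minus_nd: "open (U::real set) \<Longrightarrow> nowhere_dense (closure U - U)"
proof -
  assume oU: "open U"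
  have cl: "closed (closure U - U)" using oU by (simp add: closed_Diff)
  have "interior (closure U - U) = {}"
  proof (rule ccontr)
    assume ne: "interior (closure U - U) \<noteq> {}"
    let ?W = "interior (closure U - U)"
    have "?W \<subseteq> closure U" using interior_subset by blast
    then have "?W \<inter> closure U \<noteq> {}" using ne by blast
    then have "?W \<inter> U \<noteq> {}" using open_Int_closure_eq_empty[of ?W U] by auto
    moreover have "?W \<inter> U = {}" using interior_subset by blast
    ultimately show False by blast
  qed
  then show ?thesis unfolding nowhere_dense_def using cl closure_closed by simp
qed

lemma bp_compl: assumes "bp B" shows "bp (- B)"
proof -
  obtain U where U: "open U" "meager ((B - U) \<union> (U - B))" using assms unfolding bp_def by blast
  define V where "V = - closure U"
  have oV: "open V" unfolding V_def by auto
  have m2: "meager (closure U - U)" unfolding meager_def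
    using closure_minus_nd[OF U(1)] by (intro exI[of _ "{closure U - U}"]) auto
  have sub: "(- B - V) \<union> (V - - B) \<subseteq> ((B - U) \<union> (U - B)) \<union> (closure U - U)"
    unfolding V_def using closure_subset[of U] by blast
  have "meager ((- B - V) \<union> (V - - B))"
    by (rule meager_subset[OF meager_Un[OF U(2) m2] sub])
  then show ?thesis unfolding bp_def using oV by blast
qed

lemma bp_Union: assumes "\<And>n::nat. bp (A n)" shows "bp (\<Union>n. A n)"
proof -
  have "\<forall>n. \<exists>U. open U \<and> meager ((A n - U) \<union> (U - A n))" using assms unfolding bp_def by blast
  then obtain U where U: "\<And>n. open (U n)" "\<And>n. meager ((A n - U n) \<union> (U n - A n))" by metis
  have sub: "((\<Union>n. A n) - (\<Union>n. U n)) \<union> ((\<Union>n. U n) - (\<Union>n. A n)) \<subseteq> \<Union>(range (\<lambda>n. (A n - U n) \<union> (U n - A n)))"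
    by blast
  have "meager (\<Union>(range (\<lambda>n. (A n - U n) \<union> (U n - A n))))"
    using U(2) by (intro meager_Union) auto
  then have "meager (((\<Union>n. A n) - (\<Union>n. U n)) \<union> ((\<Union>n. U n) - (\<Union>n. A n)))"
    using meager_subset sub by blast
  moreover have "open (\<Union>n. U n)" using U(1) by auto
  ultimately show ?thesis unfolding bp_def by blast
qed

lemma borel_bp: assumes "B \<in> sets borel" shows "bp B"
proof -
  have "B \<in> sigma_sets UNIV {S. open S}" using assms sets_borel by auto
  then show ?thesis
  proof (induction rule: sigma_sets.induct)
    case (Basic a) then show ?case using bp_open by auto
  next
    case Empty then show ?case using bp_open by auto
  next
    case (Compl a) then show ?case using bp_compl by (simp add: Compl_eq_Diff_UNIV[symmetric])
  next
    case (Union a) then show ?case using bp_Union by auto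
  qed
qed

lemma nonmeager_borel:
  assumes "B \<in> sets borel" "\<not> meager B"
  shows "\<exists>U M. open U \<and> U \<noteq> {} \<and> meager M \<and> U - M \<subseteq> B"
proof -
  obtain U where U: "open U" "meager ((B - U) \<union> (U - B))" using borel_bp[OF assms(1)] unfolding bp_def by blast
  have "U \<noteq> {}"
  proof
    assume "U = {}"
    then have "meager B" using U(2) by simp
    then show False using assms(2) by simp
  qed
  moreover have "U - ((B - U) \<union> (U - B)) \<subseteq> B" by blast
  ultimately show ?thesis using U by blast
qed


lemma countable_null: "countable (N::real set) \<Longrightarrow> N \<in> null_sets lebesgue"
  using countable_imp_null_set_lborel null_sets_completionI by blast

lemma null_sub: "A \<subseteq> B \<Longrightarrow> B \<in> null_sets lebesgue \<Longrightarrow> (A::real set) \<in> null_sets lebesgue"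
  using completion.complete2 by blast

lemma pos_not_null:
  assumes "K \<in> sets lebesgue" "emeasure lebesgue K > 0" "(N::real set) \<in> null_sets lebesgue"
  shows "\<exists>x\<in>K. x \<notin> N"
proof (rule ccontr)
  assume "\<not> ?thesis"
  then have "K \<subseteq> N" by blast
  then have "K \<in> null_sets lebesgue" using null_sub assms(3) by blast
  then show False using assms(2) by auto
qed

definition Ndec :: "(nat \<times> rat \<times> rat) set \<Rightarrow> real set" where
  "Ndec S = (\<Inter>n. openDec {(a,b). (n,a,b) \<in> S})"

lemma Ndec_cover:
  assumes "N \<in> null_sets lebesgue"
  shows "\<exists>S. N \<subseteq> Ndec S \<and> Ndec S \<in> null_sets lebesgue"
proof -
  have NS: "N \<in> sets lebesgue" using assms by auto
  have "\<exists>T. open T \<and> N \<subseteq> T \<and> emeasure lebesgue T < ennreal (1 / Suc n)" for n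
  proof -
    obtain T where T: "open T" "N \<subseteq> T" "(T - N) \<in> lmeasurable" "emeasure lebesgue (T - N) < ennreal (1 / Suc n)"
      using sets_lebesgue_outer_open[OF NS, of "1 / Suc n"] by auto
    have "T = N \<union> (T - N)" using T(2) by blast
    then have "emeasure lebesgue T \<le> emeasure lebesgue N + emeasure lebesgue (T - N)"
      using emeasure_subadditive[of N lebesgue "T - N"] NS T(3) by (metis fmeasurable_def mem_Collect_eq)
    also have "\<dots> = emeasure lebesgue (T - N)" using assms by auto
    finally show ?thesis using T by (intro exI[of _ T]) auto
  qed
  then obtain T where T: "\<And>n. open (T n)" "\<And>n. N \<subseteq> T n" "\<And>n. emeasure lebesgue (T n) < ennreal (1 / Suc n)"
    by metis
  have "\<exists>R. openDec R = T n" for n using openDec_surj T(1) by blast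
  then obtain R where R: "\<And>n. openDec (R n) = T n" by metis
  define S where "S = {(n,a,b). (a,b) \<in> R n}"
  have eq: "Ndec S = (\<Inter>n. T n)" unfolding Ndec_def S_def using R by auto
  have meas: "(\<Inter>n. T n) \<in> sets lebesgue" using T(1) by (intro sets.countable_INT') auto
  have "emeasure lebesgue (\<Inter>n. T n) \<le> 0"
  proof (rule ennreal_le_epsilon)
    fix e :: real assume "0 < e"
    then obtain n where n: "1 / Suc n < e" using nat_approx_posE by blast
    have "emeasure lebesgue (\<Inter>n. T n) \<le> emeasure lebesgue (T n)"
      using T(1) meas by (intro emeasure_mono) auto
    also have "\<dots> \<le> ennreal e" using T(3)[of n] n
      by (meson ennreal_leI less_imp_le order.strict_trans2 order_less_imp_le)
    finally show "emeasure lebesgue (\<Inter>n. T n) \<le> 0 + ennreal e" by simp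
  qed
  then have "(\<Inter>n. T n) \<in> null_sets lebesgue" using meas by (auto simp: null_sets_def)
  then show ?thesis using eq T(2) by (intro exI[of _ S]) auto
qed

lemma pos_closed:
  assumes "B \<in> sets lebesgue" "emeasure lebesgue B > 0"
  shows "\<exists>K. closed K \<and> K \<subseteq> B \<and> emeasure lebesgue (K::real set) > 0"
proof (rule ccontr)
  assume H: "\<not> ?thesis"
  have "emeasure lebesgue B \<le> 0"
  proof (rule ennreal_le_epsilon)
    fix e :: real assume "0 < e"
    obtain T where T: "closed T" "T \<subseteq> B" "B-T \<in> lmeasurable" "emeasure lebesgue (B - T) < ennreal e"
      using sets_lebesgue_inner_closed[OF assms(1) \<open>0<e\<close>] by auto
    have T0: "emeasure lebesgue T = 0" using H T by auto
    have Ts: "T \<in> sets lebesgue" using T(1) by (simp add: borel_closed)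
    have "B = T \<union> (B - T)" using T(2) by blast
    then have "emeasure lebesgue B \<le> emeasure lebesgue T + emeasure lebesgue (B - T)"
      using emeasure_subadditive[of T lebesgue "B - T"] Ts T(3) by (metis fmeasurable_def mem_Collect_eq)
    also have "\<dots> \<le> ennreal e" using T0 T(4) by simp
    finally show "emeasure lebesgue B \<le> 0 + ennreal e" by simp
  qed
  then show False using assms(2) by simp
qed


definition fcode :: "(real \<Rightarrow> real) \<Rightarrow> (rat \<times> rat) set" where
  "fcode f = {(q,r). of_rat r < f (of_rat q)}"

lemma open_has_rat: "open (S::real set) \<Longrightarrow> x \<in> S \<Longrightarrow> \<exists>q. of_rat q \<in> S"
proof -
  assume "open S" "x \<in> S"
  then obtain e where e: "e > 0" "ball x e \<subseteq> S" using open_contains_ball by blast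
  obtain q where "x < of_rat q" "of_rat q < x + e" using rat_between[of x "x+e"] e by auto
  then have "of_rat q \<in> ball x e" by (auto simp: dist_real_def)
  then show ?thesis using e by blast
qed

lemma fcode_inj_aux:
  assumes f: "continuous_on UNIV f" and g: "continuous_on UNIV g" and x: "f x < g x"
  shows "fcode f \<noteq> fcode g"
proof -
  let ?S = "(\<lambda>y. g y - f y) -` {0<..}"
  have "continuous_on UNIV (\<lambda>y. g y - f y)" using f g by (intro continuous_intros)
  then have "open ?S" by (simp add: open_vimage)
  moreover have "x \<in> ?S" using x by simp
  ultimately obtain q where "of_rat q \<in> ?S" using open_has_rat by blast
  then have "f (of_rat q) < g (of_rat q)" by simp
  then obtain r where r: "f (of_rat q) < of_rat r" "of_rat r < g (of_rat q)" using rat_between by blast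
  then have "(q,r) \<in> fcode g" "(q,r) \<notin> fcode f" unfolding fcode_def by auto
  then show ?thesis by blast
qed

lemma fcode_inj:
  assumes "continuous_on UNIV f" "continuous_on UNIV g" "fcode f = fcode g"
  shows "f = g"
proof
  fix x show "f x = g x"
    using fcode_inj_aux[OF assms(1,2), of x] fcode_inj_aux[OF assms(2,1), of x] assms(3)
    by (metis linorder_neqE_linordered_idom)
qed

definition Dec :: "((real \<Rightarrow> real) \<Rightarrow> bool) \<Rightarrow> (real \<Rightarrow> real) \<Rightarrow> (rat \<times> rat) set \<Rightarrow> (real \<Rightarrow> real)" where
  "Dec P d C = (if \<exists>f. P f \<and> fcode f = C then SOME f. P f \<and> fcode f = C else d)"

lemma Dec_P: "P d \<Longrightarrow> P (Dec P d C)"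
proof -
  assume "P d"
  show ?thesis
  proof (cases "\<exists>f. P f \<and> fcode f = C")
    case True
    then have "P (SOME f. P f \<and> fcode f = C) \<and> fcode (SOME f. P f \<and> fcode f = C) = C" by (rule someI_ex)
    then show ?thesis unfolding Dec_def using True by simp
  next
    case False show ?thesis unfolding Dec_def if_not_P[OF False] by (rule \<open>P d\<close>)
  qed
qed

lemma Dec_code:
  assumes "P f" "\<And>g. P g \<Longrightarrow> continuous_on UNIV g"
  shows "Dec P d (fcode f) = f"
proof -
  have ex: "\<exists>h. P h \<and> fcode h = fcode f" using assms(1) by blast
  have "P (SOME h. P h \<and> fcode h = fcode f) \<and> fcode (SOME h. P h \<and> fcode h = fcode f) = fcode f"
    by (rule someI_ex[OF ex])
  then have "(SOME h. P h \<and> fcode h = fcode f) = f" using fcode_inj assms by blast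
  then show ?thesis unfolding Dec_def using ex by simp
qed


lemma subsingleton_countable: "(\<And>a b. a \<in> S \<Longrightarrow> b \<in> S \<Longrightarrow> a = b) \<Longrightarrow> countable S"
proof -
  assume H: "\<And>a b. a \<in> S \<Longrightarrow> b \<in> S \<Longrightarrow> a = b"
  show ?thesis
  proof (cases "S = {}")
    case False
    then obtain a where "a \<in> S" by blast
    then have "S = {a}" using H by blast
    then show ?thesis by simp
  qed simp
qed
lemma level_countable: "inj (f::real\<Rightarrow>real) \<Longrightarrow> countable {x. f x = c}"
proof (rule subsingleton_countable)
  fix a b assume "inj f" "a \<in> {x. f x = c}" "b \<in> {x. f x = c}"
  then have "f a = f b" by simp
  then show "a = b" using injD[OF \<open>inj f\<close>] by blast
qed
lemma level2_countable: "inj (f::real\<Rightarrow>real) \<Longrightarrow> countable {x. f (a - x) = c}"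
proof (rule subsingleton_countable)
  fix u v assume "inj f" "u \<in> {x. f (a - x) = c}" "v \<in> {x. f (a - x) = c}"
  then have "f (a - u) = f (a - v)" by simp
  then have "a - u = a - v" using injD[OF \<open>inj f\<close>] by blast
  then show "u = v" by simp
qed

lemma lac_continuous:
  assumes "locally_abs_continuous g"
  shows "continuous_on UNIV g"
proof -
  have "isCont g x" for x
  proof -
    have ac: "abs_continuous_on_interval g (x - 1) (x + 1)" using assms unfolding locally_abs_continuous_def by simp
    have "\<exists>d>0. \<forall>y. dist y x < d \<longrightarrow> dist (g y) (g x) < e" if e: "e > 0" for e
    proof -
      obtain \<delta> where dH: "\<delta> > 0 \<and> (\<forall>(n::nat) (u::nat \<Rightarrow> real) (v::nat \<Rightarrow> real).
          (\<forall>i<n. x - 1 \<le> u i \<and> u i \<le> v i \<and> v i \<le> x + 1)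
          \<and> (\<forall>i<n. \<forall>j<n. i \<noteq> j \<longrightarrow> v i \<le> u j \<or> v j \<le> u i) \<and> (\<Sum>i<n. v i - u i) < \<delta>
          \<longrightarrow> (\<Sum>i<n. \<bar>g (v i) - g (u i)\<bar>) < e)"
        using ac[unfolded abs_continuous_on_interval_def, rule_format, OF e] ..
      note d = conjunct1[OF dH] and H = conjunct2[OF dH]
      show ?thesis
      proof (intro exI[of _ "min \<delta> 1"] conjI allI impI)
        show "min \<delta> 1 > 0" using d by simp
        fix y assume y: "dist y x < min \<delta> 1"
        have "(\<Sum>i<(1::nat). \<bar>g ((\<lambda>_. max x y) i) - g ((\<lambda>_. min x y) i)\<bar>) < e"
          apply (rule H[rule_format])
          using y by (auto simp: dist_real_def)
        then have "\<bar>g (max x y) - g (min x y)\<bar> < e" by simp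
        then show "dist (g y) (g x) < e"
          by (cases "x \<le> y") (simp_all add: dist_real_def max_def min_def abs_minus_commute)
      qed
    qed
    then show ?thesis unfolding continuous_at_eps_delta by blast
  qed
  then show ?thesis by (simp add: continuous_at_imp_continuous_on)
qed

definition rdec :: "rat set \<Rightarrow> real" where "rdec S = Sup (real_of_rat ` S)"
definition rcode :: "real \<Rightarrow> rat set" where "rcode x = {q. of_rat q < x}"

lemma rdec_rcode: "rdec (rcode x) = x"
  unfolding rdec_def rcode_def
proof (rule cSup_eq_non_empty)
  obtain q where "x - 1 < of_rat q" "of_rat q < x" using rat_between[of "x - 1" x] by auto
  then show "real_of_rat ` {q. real_of_rat q < x} \<noteq> {}" by auto
  show "\<And>y. y \<in> real_of_rat ` {q. real_of_rat q < x} \<Longrightarrow> y \<le> x" by auto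
  fix y assume H: "\<And>z. z \<in> real_of_rat ` {q. real_of_rat q < x} \<Longrightarrow> z \<le> y"
  show "x \<le> y"
  proof (rule ccontr)
    assume "\<not> x \<le> y"
    then obtain q where "y < of_rat q" "of_rat q < x" using rat_between[of y x] by auto
    then show False using H[of "of_rat q"] by auto
  qed
qed

definition sdec :: "(real \<Rightarrow> real) \<Rightarrow> bool" where "sdec g \<longleftrightarrow> (\<forall>x y. x < y \<longrightarrow> g y < g x)"

lemma cross_countable: "strict_mono (f::real\<Rightarrow>real) \<Longrightarrow> sdec g \<Longrightarrow> countable {x. f x = g x}"
proof (rule subsingleton_countable)
  fix a b assume f: "strict_mono f" and g: "sdec g" and a: "a \<in> {x. f x = g x}" and b: "b \<in> {x. f x = g x}"
  show "a = b"
  proof (rule ccontr)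
    assume "a \<noteq> b"
    then consider "a < b" | "b < a" by linarith
    then show False
    proof cases
      case 1 then have "f a < f b" "g b < g a" using f g unfolding strict_mono_def sdec_def by auto
      then show False using a b by simp
    next
      case 2 then have "f b < f a" "g a < g b" using f g unfolding strict_mono_def sdec_def by auto
      then show False using a b by simp
    qed
  qed
qed

lemma sdec_inj: "sdec g \<Longrightarrow> inj g"
proof (rule injI)
  fix x y assume g: "sdec g" and e: "g x = g y"
  show "x = y"
  proof (rule ccontr)
    assume "x \<noteq> y"
    then have "x < y \<or> y < x" by linarith
    then show False using g e unfolding sdec_def by force
  qed
qed


definition qsc :: "rat \<Rightarrow> real \<times> real \<Rightarrow> real \<times> real" where "qsc q v = of_rat q *\<^sub>R v"

interpretation Q: vector_space qsc
  by unfold_locales (simp_all add: qsc_def scaleR_add_right scaleR_add_left of_rat_add of_rat_mult)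

lemma rat_independent_iff: "rat_independent A \<longleftrightarrow> Q.independent A"
  unfolding rat_independent_def Q.dependent_explicit qsc_def by blast

lemma rat_span_eq: "rat_span A = Q.span A"
  unfolding rat_span_def Q.span_explicit qsc_def by blast

lemma countable_span:
  assumes "countable P" shows "countable (Q.span P)"
proof -
  let ?X = "SIGMA t:{t. finite t \<and> t \<subseteq> P}. (t \<rightarrow>\<^sub>E (UNIV::rat set))"
  have c1: "countable {t. finite t \<and> t \<subseteq> P}" by (rule countable_Collect_finite_subset[OF assms])
  have c2: "countable (t \<rightarrow>\<^sub>E (UNIV::rat set))" if "t \<in> {t. finite t \<and> t \<subseteq> P}" for t
    using that by (intro countable_PiE) simp_all
  have cX: "countable ?X" using c1 c2 by (rule countable_SIGMA)
  have sub: "Q.span P \<subseteq> (\<lambda>(t,r). \<Sum>a\<in>t. qsc (r a) a) ` ?X"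
  proof
    fix y assume "y \<in> Q.span P"
    then obtain t r where tr: "finite t" "t \<subseteq> P" "y = (\<Sum>a\<in>t. qsc (r a) a)"
      unfolding Q.span_explicit by blast
    have "y = (\<Sum>a\<in>t. qsc (restrict r t a) a)" unfolding tr(3) by (rule sum.cong) simp_all
    moreover have "(t, restrict r t) \<in> ?X" using tr by simp
    ultimately show "y \<in> (\<lambda>(t,r). \<Sum>a\<in>t. qsc (r a) a) ` ?X"
      by (intro rev_image_eqI[of "(t, restrict r t)"]) simp_all
  qed
  show ?thesis by (rule countable_subset[OF sub countable_image[OF cX]])
qed

lemma vec_indep:
  assumes "Q.independent P" "v \<notin> Q.span P" "p \<notin> Q.span (insert v P)"
  shows "Q.independent (insert (v - p) (insert p P)) \<and> v \<in> Q.span (insert (v - p) (insert p P))"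
proof
  have i1: "Q.independent (insert v P)" using assms(1,2) Q.independent_insertI by blast
  have i2: "Q.independent (insert p (insert v P))" using i1 assms(3) Q.independent_insertI by blast
  have i3: "Q.independent (insert p P)" using i2 Q.independent_mono by blast
  have "v \<in> Q.span (insert v P)" by (rule Q.span_base) simp
  then have "v \<noteq> p" using assms(3) by blast
  moreover have "v \<notin> P" using assms(2) Q.span_base by blast
  ultimately have vP: "v \<notin> insert p P" by simp
  have "v \<notin> Q.span (insert p P)"
  proof
    assume "v \<in> Q.span (insert p P)"
    moreover have "Q.independent (insert v (insert p P)) = (Q.independent (insert p P) \<and> v \<notin> Q.span (insert p P))"
      using Q.independent_insert[of v "insert p P"] by (simp only: if_not_P[OF vP])
    ultimately have "Q.dependent (insert v (insert p P))" by simp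
    moreover have "insert v (insert p P) = insert p (insert v P)" by blast
    ultimately show False using i2 by simp
  qed
  moreover have "p \<in> Q.span (insert p P)" by (simp add: Q.span_base)
  ultimately have "v - p \<notin> Q.span (insert p P)"
    using Q.span_add[of "v - p" "insert p P" p] by auto
  then show "Q.independent (insert (v - p) (insert p P))" using i3 Q.independent_insertI by blast
  have "v - p \<in> Q.span (insert (v - p) (insert p P))" "p \<in> Q.span (insert (v - p) (insert p P))"
    by (auto intro: Q.span_base)
  then show "v \<in> Q.span (insert (v - p) (insert p P))" using Q.span_add by fastforce
qed


type_synonym cty = "(rat\<times>rat) + (rat\<times>rat) + (nat\<times>rat\<times>rat) + (nat\<times>rat\<times>rat) + (rat\<times>rat) + (rat\<times>rat) + rat + rat"

definition c1 :: "cty set \<Rightarrow> (rat\<times>rat) set" where "c1 w = {x. Inl x \<in> w}"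
definition c2 :: "cty set \<Rightarrow> (rat\<times>rat) set" where "c2 w = {x. Inr (Inl x) \<in> w}"
definition c3 :: "cty set \<Rightarrow> (nat\<times>rat\<times>rat) set" where "c3 w = {x. Inr (Inr (Inl x)) \<in> w}"
definition c4 :: "cty set \<Rightarrow> (nat\<times>rat\<times>rat) set" where "c4 w = {x. Inr (Inr (Inr (Inl x))) \<in> w}"
definition c5 :: "cty set \<Rightarrow> (rat\<times>rat) set" where "c5 w = {x. Inr (Inr (Inr (Inr (Inl x)))) \<in> w}"
definition c6 :: "cty set \<Rightarrow> (rat\<times>rat) set" where "c6 w = {x. Inr (Inr (Inr (Inr (Inr (Inl x))))) \<in> w}"
definition c7 :: "cty set \<Rightarrow> rat set" where "c7 w = {x. Inr (Inr (Inr (Inr (Inr (Inr (Inl x)))))) \<in> w}"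
definition c8 :: "cty set \<Rightarrow> rat set" where "c8 w = {x. Inr (Inr (Inr (Inr (Inr (Inr (Inr x)))))) \<in> w}"

definition mk :: "(rat\<times>rat) set \<Rightarrow> (rat\<times>rat) set \<Rightarrow> (nat\<times>rat\<times>rat) set \<Rightarrow> (nat\<times>rat\<times>rat) set
   \<Rightarrow> (rat\<times>rat) set \<Rightarrow> (rat\<times>rat) set \<Rightarrow> rat set \<Rightarrow> rat set \<Rightarrow> cty set" where
  "mk a1 a2 a3 a4 a5 a6 a7 a8 = Inl ` a1 \<union> (Inr \<circ> Inl) ` a2 \<union> (Inr \<circ> Inr \<circ> Inl) ` a3
     \<union> (Inr \<circ> Inr \<circ> Inr \<circ> Inl) ` a4 \<union> (Inr \<circ> Inr \<circ> Inr \<circ> Inr \<circ> Inl) ` a5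
     \<union> (Inr \<circ> Inr \<circ> Inr \<circ> Inr \<circ> Inr \<circ> Inl) ` a6 \<union> (Inr \<circ> Inr \<circ> Inr \<circ> Inr \<circ> Inr \<circ> Inr \<circ> Inl) ` a7
     \<union> (Inr \<circ> Inr \<circ> Inr \<circ> Inr \<circ> Inr \<circ> Inr \<circ> Inr) ` a8"

lemma mk_simps:
  "c1 (mk a1 a2 a3 a4 a5 a6 a7 a8) = a1" "c2 (mk a1 a2 a3 a4 a5 a6 a7 a8) = a2"
  "c3 (mk a1 a2 a3 a4 a5 a6 a7 a8) = a3" "c4 (mk a1 a2 a3 a4 a5 a6 a7 a8) = a4"
  "c5 (mk a1 a2 a3 a4 a5 a6 a7 a8) = a5" "c6 (mk a1 a2 a3 a4 a5 a6 a7 a8) = a6"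
  "c7 (mk a1 a2 a3 a4 a5 a6 a7 a8) = a7" "c8 (mk a1 a2 a3 a4 a5 a6 a7 a8) = a8"
  unfolding mk_def c1_def c2_def c3_def c4_def c5_def c6_def c7_def c8_def by auto

lemma exists_surj: "\<exists>s::real \<Rightarrow> cty set. surj s"
proof -
  have inj: "inj (\<lambda>S::cty set. to_nat ` S)"
    by (rule injI) (metis inj_image_eq_iff inj_to_nat)
  have "(UNIV::cty set set) \<lesssim> (UNIV::nat set set)"
    unfolding lepoll_def using inj by blast
  also have "(UNIV::nat set set) \<approx> (UNIV::real set)" by (rule nat_sets_eqpoll_reals)
  finally have "(UNIV::cty set set) \<lesssim> (UNIV::real set)" .
  then obtain g where "(UNIV::cty set set) \<subseteq> g ` (UNIV::real set)" unfolding lepoll_iff by blast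
  then have "surj g" by blast
  then show ?thesis by blast
qed

definition sig :: "real \<Rightarrow> cty set" where "sig = (SOME s. surj s)"

lemma sig_surj: "\<exists>a. sig a = w"
proof -
  have "surj sig" unfolding sig_def using exists_surj by (rule someI_ex)
  then show ?thesis by (metis surjD)
qed

definition PF :: "(real \<Rightarrow> real) \<Rightarrow> bool" where "PF f \<longleftrightarrow> strict_mono f \<and> continuous_on UNIV f"
definition PG :: "(real \<Rightarrow> real) \<Rightarrow> bool" where "PG g \<longleftrightarrow> sdec g \<and> continuous_on UNIV g"

definition FF :: "cty set \<Rightarrow> real \<Rightarrow> real" where "FF w = Dec PF id (c1 w)"
definition GG :: "cty set \<Rightarrow> real \<Rightarrow> real" where "GG w = Dec PG uminus (c2 w)"
definition MM :: "cty set \<Rightarrow> real set" where "MM w = (if meager (Mdec (c3 w)) then Mdec (c3 w) else {})"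
definition NN :: "cty set \<Rightarrow> real set" where "NN w = (if Ndec (c4 w) \<in> null_sets lebesgue then Ndec (c4 w) else {})"
definition UU :: "cty set \<Rightarrow> real set" where "UU w = openDec (c5 w)"
definition KK :: "cty set \<Rightarrow> real set" where "KK w = - openDec (c6 w)"
definition VV :: "cty set \<Rightarrow> real \<times> real" where "VV w = (rdec (c7 w), rdec (c8 w))"

lemma PF_id: "PF id" unfolding PF_def by (simp add: strict_mono_def continuous_on_id)
lemma PG_uminus: "PG uminus" unfolding PG_def sdec_def by (simp add: continuous_on_minus continuous_on_id)

lemma FF_PF: "PF (FF w)" unfolding FF_def by (rule Dec_P[of PF, OF PF_id])
lemma GG_PG: "PG (GG w)" unfolding GG_def by (rule Dec_P[of PG, OF PG_uminus])
lemma MM_meager: "meager (MM w)" unfolding MM_def using meager_empty by simp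
lemma NN_null: "NN w \<in> null_sets lebesgue" unfolding NN_def by simp
lemma UU_open: "open (UU w)" unfolding UU_def by (rule open_openDec)
lemma KK_closed: "closed (KK w)" unfolding KK_def using open_openDec by (simp add: closed_Compl)

lemma FF_code: "PF f \<Longrightarrow> c1 w = fcode f \<Longrightarrow> FF w = f"
  unfolding FF_def using Dec_code[of PF f] unfolding PF_def by simp
lemma GG_code: "PG g \<Longrightarrow> c2 w = fcode g \<Longrightarrow> GG w = g"
  unfolding GG_def using Dec_code[of PG g] unfolding PG_def by simp


lemma PF_inj: "PF f \<Longrightarrow> inj f"
proof (rule injI)
  fix x y assume f: "PF f" and e: "f x = f y"
  show "x = y"
  proof (rule ccontr)
    assume "x \<noteq> y"
    then have "x < y \<or> y < x" by (simp add: neq_iff)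
    then show False using f e unfolding PF_def strict_mono_def by force
  qed
qed
lemma PG_inj: "PG g \<Longrightarrow> inj g" unfolding PG_def using sdec_inj by blast

lemma luzin_pt:
  assumes "countable P" "open U" "U \<noteq> {}" "meager M0" "PF F" "countable GS" "\<forall>g\<in>GS. PG g"
  shows "\<exists>x. x \<in> U \<and> x \<notin> M0 \<and> (\<forall>g\<in>GS. F x \<noteq> g x) \<and> (x, F x) \<notin> Q.span P"
proof -
  have cc: "countable {x. F x = g x}" if "g \<in> GS" for g
    using cross_countable[of F g] assms(5,7) that unfolding PF_def PG_def by blast
  have c2: "countable (\<Union>g\<in>GS. {x. F x = g x})" using cc assms(6) by (intro countable_UN) auto
  have c3: "countable (fst ` Q.span P)" using countable_span[OF assms(1)] by simp
  have "meager (M0 \<union> (\<Union>g\<in>GS. {x. F x = g x}) \<union> fst ` Q.span P)"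
    using assms(4) meager_countable[OF c2] meager_countable[OF c3] by (intro meager_Un)
  from Baire_meager[OF assms(2,3) this]
  obtain x where x: "x \<in> U" "x \<notin> M0 \<union> (\<Union>g\<in>GS. {x. F x = g x}) \<union> fst ` Q.span P"
    by (rule bexE)
  have "(x, F x) \<notin> Q.span P"
  proof
    assume "(x, F x) \<in> Q.span P"
    then have "fst (x, F x) \<in> fst ` Q.span P" by (rule imageI)
    then show False using x by simp
  qed
  moreover have "x \<notin> M0" "\<forall>g\<in>GS. F x \<noteq> g x" using x(2) by auto
  ultimately show ?thesis using x(1) by auto
qed

lemma sierp_pt:
  assumes "countable P" "K \<in> sets lebesgue" "emeasure lebesgue K > 0" "N0 \<in> null_sets lebesgue"
    "PG G" "countable FS" "\<forall>f\<in>FS. PF f"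
  shows "\<exists>x. x \<in> K \<and> x \<notin> N0 \<and> (\<forall>f\<in>FS. f x \<noteq> G x) \<and> (x, G x) \<notin> Q.span P"
proof -
  have cc: "countable {x. f x = G x}" if "f \<in> FS" for f
    using cross_countable[of f G] assms(5,7) that unfolding PF_def PG_def by blast
  have c2: "countable (\<Union>f\<in>FS. {x. f x = G x})" using cc assms(6) by (intro countable_UN) auto
  have c3: "countable (fst ` Q.span P)" using countable_span[OF assms(1)] by simp
  have "(N0 \<union> ((\<Union>f\<in>FS. {x. f x = G x}) \<union> fst ` Q.span P)) \<in> null_sets lebesgue"
    using assms(4) countable_null c2 c3 by (intro null_sets.Un) auto
  from pos_not_null[OF assms(2,3) this]
  obtain x where x: "x \<in> K" "x \<notin> N0 \<union> ((\<Union>f\<in>FS. {x. f x = G x}) \<union> fst ` Q.span P)"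
    by (rule bexE)
  have "(x, G x) \<notin> Q.span P"
  proof
    assume "(x, G x) \<in> Q.span P"
    then have "fst (x, G x) \<in> fst ` Q.span P" by (rule imageI)
    then show False using x by simp
  qed
  moreover have "x \<notin> N0" "\<forall>f\<in>FS. f x \<noteq> G x" using x(2) by auto
  ultimately show ?thesis using x(1) by auto
qed

lemma vec_pt:
  assumes "countable P" "countable HS" "\<forall>h\<in>HS. inj h"
  shows "\<exists>x. (x, 0) \<notin> Q.span (insert v P) \<and> (\<forall>h\<in>HS. h x \<noteq> 0 \<and> h (fst v - x) \<noteq> snd v)"
proof -
  define S1 where "S1 = fst ` Q.span (insert v P)"
  define S2 where "S2 = (\<Union>h\<in>HS. {x. h x = 0} \<union> {x. h (fst v - x) = snd v})"
  have c1: "countable S1" unfolding S1_def using countable_span[of "insert v P"] assms(1) by simp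
  have c2: "countable S2" unfolding S2_def
    using assms(2,3) level_countable level2_countable by (intro countable_UN) auto
  have "countable (S1 \<union> S2)" using c1 c2 by (rule countable_Un)
  then have "S1 \<union> S2 \<noteq> UNIV" using uncountable_UNIV_real by metis
  then obtain x where x0: "x \<notin> S1 \<union> S2" by auto
  then have x1: "x \<notin> S1" and x2: "x \<notin> S2" by auto
  have "(x, 0) \<notin> Q.span (insert v P)"
  proof
    assume "(x, 0) \<in> Q.span (insert v P)"
    then have "fst (x, 0::real) \<in> S1" unfolding S1_def by (rule imageI)
    then show False using x1 by simp
  qed
  moreover have "\<forall>h\<in>HS. h x \<noteq> 0 \<and> h (fst v - x) \<noteq> snd v" using x2 unfolding S2_def by auto
  ultimately show ?thesis by blast
qed


definition Fs :: "real \<Rightarrow> (real \<Rightarrow> real) set" where "Fs a = (\<lambda>b. FF (sig b)) ` {b. lt b a}"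
definition Gs :: "real \<Rightarrow> (real \<Rightarrow> real) set" where "Gs a = (\<lambda>b. GG (sig b)) ` {b. lt b a}"
definition Ma :: "real \<Rightarrow> real set" where "Ma a = (\<Union>b\<in>{b. lt b a}. MM (sig b))"
definition Na :: "real \<Rightarrow> real set" where "Na a = (\<Union>b\<in>{b. lt b a}. NN (sig b))"

definition okp :: "real \<Rightarrow> real \<times> real \<Rightarrow> bool" where
  "okp a p \<longleftrightarrow> (\<forall>f\<in>Fs a. snd p = f (fst p) \<longrightarrow> fst p \<notin> Ma a) \<and> (\<forall>g\<in>Gs a. snd p = g (fst p) \<longrightarrow> fst p \<notin> Na a)"

definition good :: "real \<Rightarrow> (real \<times> real) set \<Rightarrow> (real \<times> real) set \<Rightarrow> bool" where
  "good a P Q \<longleftrightarrow> finite Q \<and> Q.independent (P \<union> Q) \<and> (\<forall>p\<in>Q. okp a p)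
     \<and> (UU (sig a) \<noteq> {} \<longrightarrow> (\<exists>x. (x, FF (sig a) x) \<in> Q \<and> x \<in> UU (sig a) \<and> x \<notin> MM (sig a)))
     \<and> (0 < emeasure lebesgue (KK (sig a)) \<longrightarrow> (\<exists>x. (x, GG (sig a) x) \<in> Q \<and> x \<in> KK (sig a) \<and> x \<notin> NN (sig a)))
     \<and> VV (sig a) \<in> Q.span (P \<union> Q)"

lemma aux_count:
  assumes CH
  shows "countable (Fs a)" "countable (Gs a)" "meager (Ma a)" "Na a \<in> null_sets lebesgue"
    "\<forall>f\<in>Fs a. PF f" "\<forall>g\<in>Gs a. PG g"
proof -
  have cI: "countable {b. lt b a}" using lt_countable[OF assms] .
  show "countable (Fs a)" unfolding Fs_def using cI by simp
  show "countable (Gs a)" unfolding Gs_def using cI by simp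
  show "meager (Ma a)" unfolding Ma_def using cI MM_meager by (intro meager_Union) auto
  show "Na a \<in> null_sets lebesgue" unfolding Na_def using cI NN_null by (intro null_sets_UN') auto
  show "\<forall>f\<in>Fs a. PF f" unfolding Fs_def using FF_PF by auto
  show "\<forall>g\<in>Gs a. PG g" unfolding Gs_def using GG_PG by auto
qed

lemma step1:
  assumes CH "countable P" "Q.independent P"
  shows "\<exists>Q1. finite Q1 \<and> Q.independent (P \<union> Q1) \<and> (\<forall>p\<in>Q1. okp a p)
     \<and> (UU (sig a) \<noteq> {} \<longrightarrow> (\<exists>x. (x, FF (sig a) x) \<in> Q1 \<and> x \<in> UU (sig a) \<and> x \<notin> MM (sig a)))"
proof (cases "UU (sig a) = {}")
  case True then show ?thesis using assms(3) by (intro exI[of _ "{}"]) simp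
next
  case False
  note ac = aux_count[OF assms(1), of a]
  have m: "meager (MM (sig a) \<union> Ma a)" using MM_meager ac(3) by (rule meager_Un)
  obtain x where x: "x \<in> UU (sig a)" "x \<notin> MM (sig a) \<union> Ma a" "\<forall>g\<in>Gs a. FF (sig a) x \<noteq> g x"
    "(x, FF (sig a) x) \<notin> Q.span P"
    using luzin_pt[OF assms(2) UU_open False m FF_PF ac(2) ac(6)] by blast
  have ind: "Q.independent (P \<union> {(x, FF (sig a) x)})" using Q.independent_insertI[OF x(4) assms(3)] by simp
  have ok: "okp a (x, FF (sig a) x)" unfolding okp_def using x(2,3) by auto
  show ?thesis using ind ok x(1,2) by (intro exI[of _ "{(x, FF (sig a) x)}"]) auto
qed

lemma KK_sets: "KK w \<in> sets lebesgue"
  using borel_closed[OF KK_closed] by simp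

lemma step2:
  assumes CH "countable P" "Q.independent P"
  shows "\<exists>Q2. finite Q2 \<and> Q.independent (P \<union> Q2) \<and> (\<forall>p\<in>Q2. okp a p)
     \<and> (0 < emeasure lebesgue (KK (sig a)) \<longrightarrow> (\<exists>x. (x, GG (sig a) x) \<in> Q2 \<and> x \<in> KK (sig a) \<and> x \<notin> NN (sig a)))"
proof (cases "0 < emeasure lebesgue (KK (sig a))")
  case False then show ?thesis using assms(3) by (intro exI[of _ "{}"]) simp
next
  case True
  note ac = aux_count[OF assms(1), of a]
  have m: "NN (sig a) \<union> Na a \<in> null_sets lebesgue" using NN_null ac(4) by (rule null_sets.Un)
  obtain x where x: "x \<in> KK (sig a)" "x \<notin> NN (sig a) \<union> Na a" "\<forall>f\<in>Fs a. f x \<noteq> GG (sig a) x"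
    "(x, GG (sig a) x) \<notin> Q.span P"
    using sierp_pt[OF assms(2) KK_sets True m GG_PG ac(1) ac(5)] by blast
  have ind: "Q.independent (P \<union> {(x, GG (sig a) x)})" using Q.independent_insertI[OF x(4) assms(3)] by simp
  have ok: "okp a (x, GG (sig a) x)" unfolding okp_def using x(2,3) by auto
  show ?thesis using ind ok x(1,2) by (intro exI[of _ "{(x, GG (sig a) x)}"]) auto
qed

lemma step3:
  assumes CH "countable P" "Q.independent P"
  shows "\<exists>Q3. finite Q3 \<and> Q.independent (P \<union> Q3) \<and> (\<forall>p\<in>Q3. okp a p) \<and> VV (sig a) \<in> Q.span (P \<union> Q3)"
proof (cases "VV (sig a) \<in> Q.span P")
  case True then show ?thesis using assms(3) by (intro exI[of _ "{}"]) simp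
next
  case False
  define v where "v = VV (sig a)"
  note ac = aux_count[OF assms(1), of a]
  have hs: "countable (Fs a \<union> Gs a)" using ac(1,2) by simp
  have hi: "\<forall>h\<in>Fs a \<union> Gs a. inj h" using ac(5,6) PF_inj PG_inj by blast
  obtain x where x: "(x, 0) \<notin> Q.span (insert v P)" "\<forall>h\<in>Fs a \<union> Gs a. h x \<noteq> 0 \<and> h (fst v - x) \<noteq> snd v"
    using vec_pt[OF assms(2) hs hi] by blast
  define p where "p = (x, 0::real)"
  have vi: "Q.independent (insert (v - p) (insert p P)) \<and> v \<in> Q.span (insert (v - p) (insert p P))"
    using vec_indep[OF assms(3)] False x(1) unfolding v_def p_def by simp
  have eq: "insert (v - p) (insert p P) = P \<union> {p, v - p}" by blast
  have ok1: "okp a p" unfolding okp_def p_def using x(2) by auto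
  have ok2: "okp a (v - p)" unfolding okp_def p_def using x(2) by (cases v) auto
  show ?thesis using vi ok1 ok2 unfolding eq v_def[symmetric] by (intro exI[of _ "{p, v - p}"]) auto
qed

lemma step_exists:
  assumes CH "countable P" "Q.independent P"
  shows "\<exists>Q. good a P Q"
proof -
  obtain Q1 where q1: "finite Q1 \<and> Q.independent (P \<union> Q1) \<and> (\<forall>p\<in>Q1. okp a p)
     \<and> (UU (sig a) \<noteq> {} \<longrightarrow> (\<exists>x. (x, FF (sig a) x) \<in> Q1 \<and> x \<in> UU (sig a) \<and> x \<notin> MM (sig a)))"
    using step1[OF assms] ..
  have c1: "countable (P \<union> Q1)" using assms(2) q1 by (simp add: countable_finite)
  obtain Q2 where q2: "finite Q2 \<and> Q.independent ((P \<union> Q1) \<union> Q2) \<and> (\<forall>p\<in>Q2. okp a p)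
     \<and> (0 < emeasure lebesgue (KK (sig a)) \<longrightarrow> (\<exists>x. (x, GG (sig a) x) \<in> Q2 \<and> x \<in> KK (sig a) \<and> x \<notin> NN (sig a)))"
    using step2[OF assms(1) c1 conjunct1[OF conjunct2[OF q1]]] ..
  have c2: "countable ((P \<union> Q1) \<union> Q2)" using c1 q2 by (simp add: countable_finite)
  obtain Q3 where q3: "finite Q3 \<and> Q.independent (((P \<union> Q1) \<union> Q2) \<union> Q3) \<and> (\<forall>p\<in>Q3. okp a p)
     \<and> VV (sig a) \<in> Q.span (((P \<union> Q1) \<union> Q2) \<union> Q3)"
    using step3[OF assms(1) c2 conjunct1[OF conjunct2[OF q2]]] ..
  have eq: "((P \<union> Q1) \<union> Q2) \<union> Q3 = P \<union> (Q1 \<union> Q2 \<union> Q3)" by blast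
  have "good a P (Q1 \<union> Q2 \<union> Q3)"
    unfolding good_def
  proof (intro conjI)
    show "finite (Q1 \<union> Q2 \<union> Q3)" using q1 q2 q3 by simp
    show "Q.independent (P \<union> (Q1 \<union> Q2 \<union> Q3))" using q3 unfolding eq by simp
    have "\<forall>p\<in>Q1. okp a p" "\<forall>p\<in>Q2. okp a p" "\<forall>p\<in>Q3. okp a p" using q1 q2 q3 by simp_all
    then show "\<forall>p\<in>Q1 \<union> Q2 \<union> Q3. okp a p" unfolding ball_Un by simp
    show "UU (sig a) \<noteq> {} \<longrightarrow> (\<exists>x. (x, FF (sig a) x) \<in> Q1 \<union> Q2 \<union> Q3 \<and> x \<in> UU (sig a) \<and> x \<notin> MM (sig a))"
      using q1 by auto
    show "0 < emeasure lebesgue (KK (sig a)) \<longrightarrow> (\<exists>x. (x, GG (sig a) x) \<in> Q1 \<union> Q2 \<union> Q3 \<and> x \<in> KK (sig a) \<and> x \<notin> NN (sig a))"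
      using q2 by auto
    show "VV (sig a) \<in> Q.span (P \<union> (Q1 \<union> Q2 \<union> Q3))" using q3 unfolding eq by simp
  qed
  then show ?thesis ..
qed


definition stage :: "real \<Rightarrow> (real \<times> real) set" where
  "stage = wfrec {(a,b). lt a b} (\<lambda>h a. SOME Q. good a (\<Union>b\<in>{b. lt b a}. h b) Q)"

definition Pc :: "real \<Rightarrow> (real \<times> real) set" where "Pc a = (\<Union>b\<in>{b. lt b a}. stage b)"

lemma stage_eq: "stage a = (SOME Q. good a (Pc a) Q)"
proof -
  have "stage a = (\<lambda>h a. SOME Q. good a (\<Union>b\<in>{b. lt b a}. h b) Q) (cut stage {(a,b). lt a b} a) a"
    unfolding stage_def by (rule wfrec[OF lt_wf])
  also have "(\<Union>b\<in>{b. lt b a}. cut stage {(a,b). lt a b} a b) = Pc a"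
    unfolding Pc_def by (rule SUP_cong) (simp_all add: cut_apply)
  finally show ?thesis by simp
qed

lemma Pc_mono: "lt b c \<Longrightarrow> Pc b \<union> stage b \<subseteq> Pc c"
  unfolding Pc_def using lt_trans by blast

lemma inv: assumes CH shows "good a (Pc a) (stage a)"
proof (induction a rule: wf_induct_rule[OF lt_wf])
  case (1 a)
  have IH: "good b (Pc b) (stage b)" if "lt b a" for b using 1 that by simp
  have fin: "finite (stage b)" if "lt b a" for b using IH[OF that] unfolding good_def by simp
  have cP: "countable (Pc a)" unfolding Pc_def
    using lt_countable[OF assms] fin by (intro countable_UN) (auto intro: countable_finite)
  define C where "C = (\<lambda>b. Pc b \<union> stage b) ` {b. lt b a}"
  have eq: "Pc a = \<Union>C"
  proof
    show "Pc a \<subseteq> \<Union>C" unfolding Pc_def C_def by blast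
    show "\<Union>C \<subseteq> Pc a" unfolding C_def using Pc_mono by blast
  qed
  have "Q.independent (\<Union>C)"
  proof (rule Q.independent_Union_directed)
    fix c d assume "c \<in> C" "d \<in> C"
    then obtain b b' where bb: "lt b a" "lt b' a" "c = Pc b \<union> stage b" "d = Pc b' \<union> stage b'"
      unfolding C_def by blast
    show "c \<subseteq> d \<or> d \<subseteq> c"
    proof (cases "b = b'")
      case True then show ?thesis using bb by simp
    next
      case False
      then have "lt b b' \<or> lt b' b" by (rule lt_total)
      then show ?thesis using Pc_mono[of b b'] Pc_mono[of b' b] bb by auto
    qed
  next
    fix c assume "c \<in> C"
    then obtain b where "lt b a" "c = Pc b \<union> stage b" unfolding C_def by blast
    then show "Q.independent c" using IH[of b] unfolding good_def by simp
  qed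
  then have iP: "Q.independent (Pc a)" using eq by simp
  have "\<exists>Q. good a (Pc a) Q" by (rule step_exists[OF assms cP iP])
  then have "good a (Pc a) (SOME Q. good a (Pc a) Q)" by (rule someI_ex)
  then show ?case using stage_eq by simp
qed


definition AA :: "(real \<times> real) set" where "AA = (\<Union>a. stage a)"

lemma fin_stage: "CH \<Longrightarrow> finite (stage a)" using inv[of a] unfolding good_def by simp
lemma ok_stage: "CH \<Longrightarrow> p \<in> stage a \<Longrightarrow> okp a p" using inv[of a] unfolding good_def by simp

lemma upto_countable: assumes CH shows "countable (fst ` (\<Union>a\<in>{a. lt a d \<or> a = d}. stage a))"
  using le_countable[OF assms] fin_stage[OF assms]
  by (intro countable_image countable_UN) (auto intro: countable_finite)

lemma AA_indep: assumes CH shows "Q.independent AA"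
proof -
  define C where "C = range (\<lambda>a. Pc a \<union> stage a)"
  have eq: "AA = \<Union>C" unfolding AA_def C_def Pc_def by blast
  have "Q.independent (\<Union>C)"
  proof (rule Q.independent_Union_directed)
    fix c d assume "c \<in> C" "d \<in> C"
    then obtain b b' where bb: "c = Pc b \<union> stage b" "d = Pc b' \<union> stage b'" unfolding C_def by blast
    show "c \<subseteq> d \<or> d \<subseteq> c"
    proof (cases "b = b'")
      case True then show ?thesis using bb by simp
    next
      case False
      then have "lt b b' \<or> lt b' b" by (rule lt_total)
      then show ?thesis using Pc_mono[of b b'] Pc_mono[of b' b] bb by auto
    qed
  next
    fix c assume "c \<in> C"
    then obtain b where "c = Pc b \<union> stage b" unfolding C_def by blast
    then show "Q.independent c" using inv[OF assms, of b] unfolding good_def by simp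
  qed
  then show ?thesis using eq by simp
qed

lemma AA_span: assumes CH shows "Q.span AA = UNIV"
proof -
  have "v \<in> Q.span AA" for v
  proof -
    obtain a where a: "sig a = mk {} {} {} {} {} {} (rcode (fst v)) (rcode (snd v))" using sig_surj by blast
    have vv: "VV (sig a) = v" unfolding a VV_def mk_simps rdec_rcode by simp
    have "VV (sig a) \<in> Q.span (Pc a \<union> stage a)" using inv[OF assms, of a] unfolding good_def by simp
    moreover have "Pc a \<union> stage a \<subseteq> AA" unfolding AA_def Pc_def by blast
    ultimately show ?thesis using vv Q.span_mono by blast
  qed
  then show ?thesis by blast
qed

lemma hamel: assumes CH shows "hamel_basis AA"
  unfolding hamel_basis_def rat_independent_iff rat_span_eq using AA_indep[OF assms] AA_span[OF assms] by simp

lemma not_le_lt: "\<not> (lt a d \<or> a = d) \<Longrightarrow> lt d a"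
  using lt_total by blast

lemma luzin1:
  assumes CH "PF f" "meager M"
  shows "countable ({x. (x, f x) \<in> AA} \<inter> M)"
proof -
  obtain S where S: "M \<subseteq> Mdec S" "meager (Mdec S)" using Mdec_cover[OF assms(3)] by blast
  obtain b0 where b0: "sig b0 = mk (fcode f) {} {} {} {} {} {} {}" using sig_surj by blast
  obtain g0 where g0: "sig g0 = mk {} {} S {} {} {} {} {}" using sig_surj by blast
  have Fb: "FF (sig b0) = f" using FF_code[OF assms(2)] b0 mk_simps by simp
  have Mg: "MM (sig g0) = Mdec S" unfolding MM_def g0 mk_simps using S(2) by simp
  define D1 where "D1 = fst ` (\<Union>a\<in>{a. lt a b0 \<or> a = b0}. stage a)"
  define D2 where "D2 = fst ` (\<Union>a\<in>{a. lt a g0 \<or> a = g0}. stage a)"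
  have "{x. (x, f x) \<in> AA} \<inter> M \<subseteq> D1 \<union> D2"
  proof
    fix x assume x: "x \<in> {x. (x, f x) \<in> AA} \<inter> M"
    then obtain a where a: "(x, f x) \<in> stage a" unfolding AA_def by blast
    show "x \<in> D1 \<union> D2"
    proof (rule ccontr)
      assume n: "x \<notin> D1 \<union> D2"
      have "\<not> (lt a b0 \<or> a = b0)"
      proof
        assume "lt a b0 \<or> a = b0"
        then have "fst (x, f x) \<in> D1" unfolding D1_def using a by blast
        then show False using n by simp
      qed
      then have l1: "lt b0 a" by (rule not_le_lt)
      have "\<not> (lt a g0 \<or> a = g0)"
      proof
        assume "lt a g0 \<or> a = g0"
        then have "fst (x, f x) \<in> D2" unfolding D2_def using a by blast
        then show False using n by simp
      qed
      then have l2: "lt g0 a" by (rule not_le_lt)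
      have fF: "f \<in> Fs a" unfolding Fs_def using l1 Fb by force
      have "MM (sig g0) \<subseteq> Ma a" unfolding Ma_def using l2 by blast
      then have xM: "x \<in> Ma a" using x S(1) Mg by blast
      have "okp a (x, f x)" by (rule ok_stage[OF assms(1) a])
      then show False unfolding okp_def using fF xM by auto
    qed
  qed
  moreover have "countable (D1 \<union> D2)" unfolding D1_def D2_def using upto_countable[OF assms(1)] by simp
  ultimately show ?thesis using countable_subset by blast
qed

lemma luzin2:
  assumes CH "PF f" "B \<in> sets borel" "\<not> meager B"
  shows "\<not> countable ({x. (x, f x) \<in> AA} \<inter> B)"
proof
  assume C: "countable ({x. (x, f x) \<in> AA} \<inter> B)"
  obtain U M where UM: "open U" "U \<noteq> {}" "meager M" "U - M \<subseteq> B" using nonmeager_borel[OF assms(3,4)] by blast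
  have "meager (M \<union> ({x. (x, f x) \<in> AA} \<inter> B))" using UM(3) meager_countable[OF C] by (rule meager_Un)
  then obtain S where S: "M \<union> ({x. (x, f x) \<in> AA} \<inter> B) \<subseteq> Mdec S" "meager (Mdec S)" using Mdec_cover by blast
  obtain u where u: "openDec u = U" using openDec_surj[OF UM(1)] by blast
  obtain a where a: "sig a = mk (fcode f) {} S {} u {} {} {}" using sig_surj by blast
  have Fa: "FF (sig a) = f" using FF_code[OF assms(2)] a mk_simps by simp
  have Ma': "MM (sig a) = Mdec S" unfolding MM_def a mk_simps using S(2) by simp
  have Ua: "UU (sig a) = U" unfolding UU_def a mk_simps u by simp
  have "\<exists>x. (x, FF (sig a) x) \<in> stage a \<and> x \<in> UU (sig a) \<and> x \<notin> MM (sig a)"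
    using inv[OF assms(1), of a] UM(2) Ua unfolding good_def by simp
  then obtain x where x: "(x, f x) \<in> stage a" "x \<in> U" "x \<notin> Mdec S" using Fa Ua Ma' by auto
  have "x \<in> {x. (x, f x) \<in> AA}" using x(1) unfolding AA_def by blast
  moreover have "x \<in> B" using x(2,3) S(1) UM(4) by blast
  ultimately show False using x(3) S(1) by blast
qed

lemma luzin: assumes CH "PF f" shows "strong_luzin {x. (x, f x) \<in> AA}"
proof -
  have "\<not> countable ({x. (x, f x) \<in> AA} \<inter> UNIV)"
    using luzin2[OF assms, of UNIV] UNIV_not_meager by simp
  then have "{x. (x, f x) \<in> AA} \<approx> (UNIV::real set)" using assms(1) unfolding CH_def by simp
  then show ?thesis unfolding strong_luzin_def using luzin1[OF assms] luzin2[OF assms] by blast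
qed


lemma sierp1:
  assumes CH "PG g" "N \<in> null_sets lebesgue"
  shows "countable ({x. (x, g x) \<in> AA} \<inter> N)"
proof -
  obtain S where S: "N \<subseteq> Ndec S" "Ndec S \<in> null_sets lebesgue" using Ndec_cover[OF assms(3)] by blast
  obtain b0 where b0: "sig b0 = mk {} (fcode g) {} {} {} {} {} {}" using sig_surj by blast
  obtain g0 where g0: "sig g0 = mk {} {} {} S {} {} {} {}" using sig_surj by blast
  have Gb: "GG (sig b0) = g" using GG_code[OF assms(2)] b0 mk_simps by simp
  have Ng: "NN (sig g0) = Ndec S" unfolding NN_def g0 mk_simps using S(2) by simp
  define D1 where "D1 = fst ` (\<Union>a\<in>{a. lt a b0 \<or> a = b0}. stage a)"
  define D2 where "D2 = fst ` (\<Union>a\<in>{a. lt a g0 \<or> a = g0}. stage a)"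
  have "{x. (x, g x) \<in> AA} \<inter> N \<subseteq> D1 \<union> D2"
  proof
    fix x assume x: "x \<in> {x. (x, g x) \<in> AA} \<inter> N"
    then obtain a where a: "(x, g x) \<in> stage a" unfolding AA_def by blast
    show "x \<in> D1 \<union> D2"
    proof (rule ccontr)
      assume n: "x \<notin> D1 \<union> D2"
      have "\<not> (lt a b0 \<or> a = b0)"
      proof
        assume "lt a b0 \<or> a = b0"
        then have "fst (x, g x) \<in> D1" unfolding D1_def using a by blast
        then show False using n by simp
      qed
      then have l1: "lt b0 a" by (rule not_le_lt)
      have "\<not> (lt a g0 \<or> a = g0)"
      proof
        assume "lt a g0 \<or> a = g0"
        then have "fst (x, g x) \<in> D2" unfolding D2_def using a by blast
        then show False using n by simp
      qed
      then have l2: "lt g0 a" by (rule not_le_lt)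
      have gG: "g \<in> Gs a" unfolding Gs_def using l1 Gb by force
      have "NN (sig g0) \<subseteq> Na a" unfolding Na_def using l2 by blast
      then have xN: "x \<in> Na a" using x S(1) Ng by blast
      have "okp a (x, g x)" by (rule ok_stage[OF assms(1) a])
      then show False unfolding okp_def using gG xN by auto
    qed
  qed
  moreover have "countable (D1 \<union> D2)" unfolding D1_def D2_def using upto_countable[OF assms(1)] by simp
  ultimately show ?thesis using countable_subset by blast
qed

lemma sierp2:
  assumes CH "PG g" "B \<in> sets lebesgue" "emeasure lebesgue B > 0"
  shows "\<not> countable ({x. (x, g x) \<in> AA} \<inter> B)"
proof
  assume C: "countable ({x. (x, g x) \<in> AA} \<inter> B)"
  obtain K where K: "closed K" "K \<subseteq> B" "emeasure lebesgue K > 0" using pos_closed[OF assms(3,4)] by blast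
  obtain S where S: "{x. (x, g x) \<in> AA} \<inter> B \<subseteq> Ndec S" "Ndec S \<in> null_sets lebesgue"
    using Ndec_cover[OF countable_null[OF C]] by blast
  have "open (- K)" using K(1) by auto
  then obtain k where k: "openDec k = - K" using openDec_surj by blast
  obtain a where a: "sig a = mk {} (fcode g) {} S {} k {} {}" using sig_surj by blast
  have Ga: "GG (sig a) = g" using GG_code[OF assms(2)] a mk_simps by simp
  have Na': "NN (sig a) = Ndec S" unfolding NN_def a mk_simps using S(2) by simp
  have Ka: "KK (sig a) = K" unfolding KK_def a mk_simps k by simp
  have "\<exists>x. (x, GG (sig a) x) \<in> stage a \<and> x \<in> KK (sig a) \<and> x \<notin> NN (sig a)"
    using inv[OF assms(1), of a] K(3) Ka unfolding good_def by simp
  then obtain x where x: "(x, g x) \<in> stage a" "x \<in> K" "x \<notin> Ndec S" using Ga Ka Na' by auto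
  have "x \<in> {x. (x, g x) \<in> AA}" using x(1) unfolding AA_def by blast
  moreover have "x \<in> B" using x(2) K(2) by blast
  ultimately show False using x(3) S(1) by blast
qed

lemma sierp: assumes CH "PG g" shows "strong_sierpinski {x. (x, g x) \<in> AA}"
proof -
  have U1: "UNIV \<in> sets lebesgue" by simp
  have U2: "emeasure lebesgue (UNIV::real set) > 0" by simp
  have "\<not> countable ({x. (x, g x) \<in> AA} \<inter> UNIV)"
    by (rule sierp2[OF assms U1 U2])
  then have "\<not> countable {x. (x, g x) \<in> AA}" by simp
  then have e: "{x. (x, g x) \<in> AA} \<approx> (UNIV::real set)" using assms(1) unfolding CH_def by simp
  have n: "\<forall>N\<in>null_sets lebesgue. countable ({x. (x, g x) \<in> AA} \<inter> N)"
    using sierp1[OF assms] by simp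
  have b: "\<forall>B\<in>sets borel. emeasure lebesgue B > 0 \<longrightarrow> \<not> countable ({x. (x, g x) \<in> AA} \<inter> B)"
  proof (intro ballI impI)
    fix B :: "real set" assume B: "B \<in> sets borel" "emeasure lebesgue B > 0"
    have "B \<in> sets lebesgue" using B(1) by simp
    then show "\<not> countable ({x. (x, g x) \<in> AA} \<inter> B)" by (rule sierp2[OF assms _ B(2)])
  qed
  show ?thesis unfolding strong_sierpinski_def using e n b by simp
qed

theorem mainTheorem9:
  assumes "CH"
  shows "\<exists>A :: (real \<times> real) set. hamel_basis A
     \<and> (\<forall>f :: real \<Rightarrow> real. strict_mono f \<and> continuous_on UNIV f
          \<longrightarrow> strong_luzin {x. (x, f x) \<in> A})
     \<and> (\<forall>g :: real \<Rightarrow> real. (\<forall>x y. x < y \<longrightarrow> g y < g x) \<and> locally_abs_continuous g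
          \<longrightarrow> strong_sierpinski {x. (x, g x) \<in> A})"
proof (intro exI[of _ AA] conjI allI impI)
  show "hamel_basis AA" by (rule hamel[OF assms])
  fix f :: "real \<Rightarrow> real" assume "strict_mono f \<and> continuous_on UNIV f"
  then have "PF f" unfolding PF_def by simp
  then show "strong_luzin {x. (x, f x) \<in> AA}" by (rule luzin[OF assms])
next
  fix g :: "real \<Rightarrow> real" assume H: "(\<forall>x y. x < y \<longrightarrow> g y < g x) \<and> locally_abs_continuous g"
  then have "PG g" unfolding PG_def sdec_def using lac_continuous by blast
  then show "strong_sierpinski {x. (x, g x) \<in> AA}" by (rule sierp[OF assms])
qed


end
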